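(* Let $\{\lambda_i\}_{i\ge0}\subset\mathbb R$ and $w(x)=\sum_{i=0}^\infty\lambda_ix^i$ for $x\in\Delta_0=[-1,1]$. The series $w$ converges uniformly on $\Delta_0$ to a function $\widetilde\sigma(x)=\int_{\Delta_1}\frac{d\sigma(t)}{1-tx}$ for some measure $\sigma\in\mathcal M_0(\Delta_1)$ if and only if the restricted Hausdorff moment problem for the sequence $\{\lambda_i\}_{i\in\mathbb Z_+}$ has a solution.
   Context: $\Delta_0=[-1,1]$, $\Delta_1=[0,1]$, $\mathbb Z_+=\{0,1,2,\dots\}$. $\mathcal M(\Delta_1)$ is the set of finite Borel measures on $\Delta_1$ whose support has infinitely many points and which do not change sign. $\mathcal M_0(\Delta_1)$ is the set of $\sigma\in\mathcal M(\Delta_1)$ such that $\lim_{x\to1,\,x\in(0,1)}\left|\int_{\Delta_1}\frac{d\sigma(t)}{1-tx}\right|<+\infty$. The restricted Hausdorff moment problem for a real sequence $\{c_i\}$ asks for $\sigma\in\mathcal M_0(\Delta_1)$ with $c_i=\int t^i\,d\sigma(t)$ for all $i$. *)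

theory Defs
  imports "HOL-Analysis.Analysis"
begin

text \<open>A sign-definite finite Borel measure sigma on Delta_1 = [0,1] is represented by a
pair (c, mu): a (positive) finite Borel measure mu on the reals, concentrated on [0,1],
and a sign c in {1, -1}; then sigma = c * mu.\<close>

definition meas_support :: "real measure \<Rightarrow> real set" where
  "meas_support \<mu> = {x. \<forall>e>0. emeasure \<mu> (ball x e) > 0}"

definition in_M :: "real \<Rightarrow> real measure \<Rightarrow> bool" where
  "in_M c \<mu> \<longleftrightarrow> c \<in> {1, -1} \<and> sets \<mu> = sets borel \<and> finite_measure \<mu>
     \<and> emeasure \<mu> (- {0..1}) = 0 \<and> infinite (meas_support \<mu>)"

definition markov_fun :: "real \<Rightarrow> real measure \<Rightarrow> real \<Rightarrow> real" where
  "markov_fun c \<mu> x = c * (\<integral>t. 1 / (1 - t * x) \<partial>\<mu>)"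

definition in_M0 :: "real \<Rightarrow> real measure \<Rightarrow> bool" where
  "in_M0 c \<mu> \<longleftrightarrow> in_M c \<mu> \<and>
     (\<exists>L::real. ((\<lambda>x. \<bar>markov_fun c \<mu> x\<bar>) \<longlongrightarrow> L) (at_left 1))"

definition restricted_hausdorff_solvable :: "(nat \<Rightarrow> real) \<Rightarrow> bool" where
  "restricted_hausdorff_solvable m \<longleftrightarrow>
     (\<exists>c \<mu>. in_M0 c \<mu> \<and> (\<forall>i. m i = c * (\<integral>t. t ^ i \<partial>\<mu>)))"

end

theory Submission imports Defs "HOL-Complex_Analysis.Cauchy_Integral_Formula" begin

lemma meas_cong:
  fixes \<mu> :: "real measure"
  assumes "sets \<mu> = sets borel" "f \<in> borel_measurable borel"
  shows "f \<in> borel_measurable \<mu>"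
  using assms measurable_cong_sets by blast

lemma AE01:
  fixes \<mu> :: "real measure"
  assumes "sets \<mu> = sets borel" "emeasure \<mu> (- {0..1}) = 0"
  shows "AE t in \<mu>. t \<in> {0..1}"
  by (rule AE_I[where N="-{0..1}"]) (use assms in auto)

lemma int_pow:
  fixes \<mu> :: "real measure"
  assumes "sets \<mu> = sets borel" "finite_measure \<mu>" "emeasure \<mu> (- {0..1}) = 0"
  shows "integrable \<mu> (\<lambda>t. t ^ i)"
proof (rule finite_measure.integrable_const_bound[OF assms(2), where B=1])
  show "AE t in \<mu>. norm (t ^ i) \<le> 1"
    using AE01[OF assms(1,3)] by eventually_elim (auto intro: power_le_one)
  show "(\<lambda>t. t ^ i) \<in> borel_measurable \<mu>"
    by (rule meas_cong[OF assms(1)]) measurable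
qed

lemma geom_bound:
  fixes z :: real
  assumes "\<bar>z\<bar> < 1"
  shows "\<bar>\<Sum>i<n. z ^ i\<bar> \<le> 1 / (1 - \<bar>z\<bar>)"
proof -
  have "\<bar>\<Sum>i<n. z ^ i\<bar> \<le> (\<Sum>i<n. \<bar>z\<bar> ^ i)"
    by (metis (no_types, lifting) power_abs sum.cong sum_abs)
  also have "\<dots> = (1 - \<bar>z\<bar> ^ n) / (1 - \<bar>z\<bar>)"
    using assms by (subst sum_gp_strict) auto
  also have "\<dots> \<le> 1 / (1 - \<bar>z\<bar>)"
    using assms by (intro divide_right_mono) auto
  finally show ?thesis .
qed

lemma key:
  fixes \<mu> :: "real measure" and x :: real
  assumes "sets \<mu> = sets borel" "finite_measure \<mu>" "emeasure \<mu> (- {0..1}) = 0"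
    and g: "integrable \<mu> g"
    and bd: "AE t in \<mu>. \<forall>n. \<bar>\<Sum>i<n. (t * x) ^ i\<bar> \<le> g t"
    and lt: "AE t in \<mu>. \<bar>t * x\<bar> < 1"
  shows "(\<lambda>n. \<Sum>i<n. (\<integral>t. t ^ i \<partial>\<mu>) * x ^ i) \<longlonglongrightarrow> (\<integral>t. 1 / (1 - t * x) \<partial>\<mu>)"
proof -
  have "(\<lambda>n. \<integral>t. (\<Sum>i<n. (t * x) ^ i) \<partial>\<mu>) \<longlonglongrightarrow> (\<integral>t. 1 / (1 - t * x) \<partial>\<mu>)"
  proof (rule integral_dominated_convergence[where w=g])
    show "(\<lambda>t. 1 / (1 - t * x)) \<in> borel_measurable \<mu>"
      by (rule meas_cong[OF assms(1)]) measurable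
    show "(\<lambda>t. \<Sum>i<n. (t * x) ^ i) \<in> borel_measurable \<mu>" for n
      by (rule meas_cong[OF assms(1)]) measurable
    show "integrable \<mu> g" by fact
    show "AE t in \<mu>. (\<lambda>n. \<Sum>i<n. (t * x) ^ i) \<longlonglongrightarrow> 1 / (1 - t * x)"
      using lt
    proof eventually_elim
      case (elim t)
      then have "norm (t * x) < 1" by auto
      from geometric_sums[OF this] show ?case by (simp add: sums_def)
    qed
    show "AE t in \<mu>. norm (\<Sum>i<n. (t * x) ^ i) \<le> g t" for n
      using bd by eventually_elim auto
  qed
  moreover have "(\<integral>t. (\<Sum>i<n. (t * x) ^ i) \<partial>\<mu>) = (\<Sum>i<n. (\<integral>t. t ^ i \<partial>\<mu>) * x ^ i)" for n
  proof -
    have "(\<integral>t. (\<Sum>i<n. (t * x) ^ i) \<partial>\<mu>) = (\<Sum>i<n. \<integral>t. t ^ i * x ^ i \<partial>\<mu>)"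
      using int_pow[OF assms(1-3)] by (simp add: power_mult_distrib integral_sum)
    then show ?thesis by simp
  qed
  ultimately show ?thesis by simp
qed


lemma powser_unique_zero:
  fixes d :: "nat \<Rightarrow> real"
  assumes sm: "\<And>x. \<bar>x\<bar> < 1 \<Longrightarrow> (\<lambda>i. d i * x ^ i) sums 0"
  shows "d i = 0"
proof (rule ccontr)
  assume ne: "d i \<noteq> 0"
  have d0: "d 0 = 0" using sm[of 0] by simp
  with ne have "i > 0" by (cases i) auto
  have sm': "norm (x - 0) < 1 \<Longrightarrow> (\<lambda>n. d n * (x - 0) ^ n) sums ((\<lambda>_. 0::real) x)" for x
    using sm[of x] by simp
  show False
  proof (rule powser_0_nonzero[OF zero_less_one sm' _ ne \<open>i > 0\<close>])
    show "(\<lambda>_. 0::real) 0 = 0" by simp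
  next
    fix r :: real
    assume r0: "0 < r" and H: "\<And>z::real. z \<in> cball 0 r - {0} \<Longrightarrow> (\<lambda>_. 0::real) z \<noteq> 0"
    have "r \<in> cball 0 r - {0}" using r0 by simp
    from H[OF this] show False by simp
  qed
qed

lemma dir1:
  fixes lam :: "nat \<Rightarrow> real"
  assumes M0: "in_M0 c \<mu>"
    and ul: "uniform_limit {-1..1} (\<lambda>n x. \<Sum>i<n. lam i * x ^ i) (markov_fun c \<mu>) sequentially"
  shows "restricted_hausdorff_solvable lam"
proof -
  from M0 have s: "sets \<mu> = sets borel" and fin: "finite_measure \<mu>" and z: "emeasure \<mu> (- {0..1}) = 0"
    by (auto simp: in_M0_def in_M_def)
  define m where "m i = (\<integral>t. t ^ i \<partial>\<mu>)" for i
  have "(\<lambda>i. (lam i - c * m i) * x ^ i) sums 0" if x: "\<bar>x\<bar> < 1" for x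
  proof -
    have 1: "(\<lambda>n. \<Sum>i<n. lam i * x ^ i) \<longlonglongrightarrow> markov_fun c \<mu> x"
    proof -
      have "x \<in> {-1..1}" using x by auto
      from tendsto_uniform_limitI[OF ul this] show ?thesis .
    qed
    have 3: "(\<lambda>n. \<Sum>i<n. m i * x ^ i) \<longlonglongrightarrow> (\<integral>t. 1 / (1 - t * x) \<partial>\<mu>)"
      unfolding m_def
    proof (rule key[OF s fin z, where g="\<lambda>_. 1 / (1 - \<bar>x\<bar>)"])
      show "integrable \<mu> (\<lambda>_. 1 / (1 - \<bar>x\<bar>))"
        using finite_measure.integrable_const[OF fin] by blast
      show "AE t in \<mu>. \<forall>n. \<bar>\<Sum>i<n. (t * x) ^ i\<bar> \<le> 1 / (1 - \<bar>x\<bar>)"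
        using AE01[OF s z]
      proof eventually_elim
        case (elim t)
        have tx: "\<bar>t * x\<bar> \<le> \<bar>x\<bar>" using elim by (auto simp: abs_mult intro: mult_left_le_one_le)
        show ?case
        proof
          fix n
          have "\<bar>\<Sum>i<n. (t * x) ^ i\<bar> \<le> 1 / (1 - \<bar>t * x\<bar>)"
            using tx x by (intro geom_bound) auto
          also have "\<dots> \<le> 1 / (1 - \<bar>x\<bar>)"
            using tx x by (intro divide_left_mono) auto
          finally show "\<bar>\<Sum>i<n. (t * x) ^ i\<bar> \<le> 1 / (1 - \<bar>x\<bar>)" .
        qed
      qed
      show "AE t in \<mu>. \<bar>t * x\<bar> < 1"
        using AE01[OF s z]
      proof eventually_elim
        case (elim t)
        have "\<bar>t * x\<bar> \<le> \<bar>x\<bar>" using elim by (auto simp: abs_mult intro: mult_left_le_one_le)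
        then show ?case using x by auto
      qed
    qed
    have 2: "(\<lambda>n. \<Sum>i<n. c * m i * x ^ i) \<longlonglongrightarrow> markov_fun c \<mu> x"
      unfolding markov_fun_def using tendsto_mult_left[OF 3, of c]
      by (simp add: sum_distrib_left mult.assoc)
    have "(\<lambda>n. (\<Sum>i<n. lam i * x ^ i) - (\<Sum>i<n. c * m i * x ^ i)) \<longlonglongrightarrow> markov_fun c \<mu> x - markov_fun c \<mu> x"
      by (intro tendsto_diff 1 2)
    then show ?thesis
      by (simp add: sums_def sum_subtractf[symmetric] left_diff_distrib)
  qed
  then have "\<And>i. lam i - c * m i = 0"
    by (intro powser_unique_zero) auto
  then show ?thesis
    unfolding restricted_hausdorff_solvable_def using M0 by (auto simp: m_def)
qed


lemma series_open:
  fixes \<mu> :: "real measure" and x :: real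
  assumes s: "sets \<mu> = sets borel" and fin: "finite_measure \<mu>" and z: "emeasure \<mu> (- {0..1}) = 0"
    and x: "\<bar>x\<bar> < 1"
  shows "(\<lambda>i. (\<integral>t. t ^ i \<partial>\<mu>) * x ^ i) sums (\<integral>t. 1 / (1 - t * x) \<partial>\<mu>)"
  unfolding sums_def
proof (rule key[OF s fin z, where g="\<lambda>_. 1 / (1 - \<bar>x\<bar>)"])
  show "integrable \<mu> (\<lambda>_. 1 / (1 - \<bar>x\<bar>))"
    using finite_measure.integrable_const[OF fin] by blast
  show "AE t in \<mu>. \<forall>n. \<bar>\<Sum>i<n. (t * x) ^ i\<bar> \<le> 1 / (1 - \<bar>x\<bar>)"
    using AE01[OF s z]
  proof eventually_elim
    case (elim t)
    have tx: "\<bar>t * x\<bar> \<le> \<bar>x\<bar>" using elim by (auto simp: abs_mult intro: mult_left_le_one_le)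
    show ?case
    proof
      fix n
      have "\<bar>\<Sum>i<n. (t * x) ^ i\<bar> \<le> 1 / (1 - \<bar>t * x\<bar>)"
        using tx x by (intro geom_bound) auto
      also have "\<dots> \<le> 1 / (1 - \<bar>x\<bar>)"
        using tx x by (intro divide_left_mono) auto
      finally show "\<bar>\<Sum>i<n. (t * x) ^ i\<bar> \<le> 1 / (1 - \<bar>x\<bar>)" .
    qed
  qed
  show "AE t in \<mu>. \<bar>t * x\<bar> < 1"
    using AE01[OF s z]
  proof eventually_elim
    case (elim t)
    have "\<bar>t * x\<bar> \<le> \<bar>x\<bar>" using elim by (auto simp: abs_mult intro: mult_left_le_one_le)
    then show ?case using x by auto
  qed
qed

lemma dir2:
  fixes lam :: "nat \<Rightarrow> real"
  assumes M0: "in_M0 c \<mu>" and mom: "\<And>i. lam i = c * (\<integral>t. t ^ i \<partial>\<mu>)"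
  shows "uniform_limit {-1..1} (\<lambda>n x. \<Sum>i<n. lam i * x ^ i) (markov_fun c \<mu>) sequentially"
proof -
  from M0 have s: "sets \<mu> = sets borel" and fin: "finite_measure \<mu>" and z: "emeasure \<mu> (- {0..1}) = 0"
    and c: "c \<in> {1, -1}"
    by (auto simp: in_M0_def in_M_def)
  from M0 obtain L where L: "((\<lambda>x. \<bar>markov_fun c \<mu> x\<bar>) \<longlongrightarrow> L) (at_left 1)"
    by (auto simp: in_M0_def)
  have ac: "\<bar>c\<bar> = 1" using c by auto
  have sp: "space \<mu> = UNIV" using sets_eq_imp_space_eq[OF s] by simp
  define m where "m i = (\<integral>t. t ^ i \<partial>\<mu>)" for i
  have m_nn: "0 \<le> m i" for i
    unfolding m_def using AE01[OF s z] by (intro integral_nonneg_AE) (auto elim!: eventually_mono)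
  have bnd: "(\<Sum>i<N. m i) \<le> L" for N
  proof (rule tendsto_le[OF trivial_limit_at_left_real L])
    have "((\<lambda>x. \<Sum>i<N. m i * x ^ i) \<longlongrightarrow> (\<Sum>i<N. m i * 1 ^ i)) (at_left 1)"
      by (intro tendsto_intros)
    then show "((\<lambda>x. \<Sum>i<N. m i * x ^ i) \<longlongrightarrow> (\<Sum>i<N. m i)) (at_left 1)" by simp
    show "\<forall>\<^sub>F x in at_left 1. (\<Sum>i<N. m i * x ^ i) \<le> \<bar>markov_fun c \<mu> x\<bar>"
      using eventually_at_left_real[OF zero_less_one]
    proof (rule eventually_mono)
      fix x :: real assume x: "x \<in> {0<..<1}"
      have sm: "(\<lambda>i. m i * x ^ i) sums (\<integral>t. 1 / (1 - t * x) \<partial>\<mu>)"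
        unfolding m_def using x by (intro series_open[OF s fin z]) auto
      have nn: "0 \<le> m i * x ^ i" for i using m_nn x by auto
      have "(\<Sum>i<N. m i * x ^ i) \<le> (\<Sum>i. m i * x ^ i)"
        using sm nn by (intro sum_le_suminf) (auto simp: sums_iff)
      also have "\<dots> = (\<integral>t. 1 / (1 - t * x) \<partial>\<mu>)" using sm by (simp add: sums_iff)
      also have "\<dots> = \<bar>markov_fun c \<mu> x\<bar>"
      proof -
        have "0 \<le> (\<Sum>i. m i * x ^ i)"
          by (rule suminf_nonneg) (use sm nn in \<open>auto simp: sums_iff\<close>)
        then have "0 \<le> (\<integral>t. 1 / (1 - t * x) \<partial>\<mu>)" using sm by (simp add: sums_iff)
        then show ?thesis by (simp add: markov_fun_def abs_mult ac)
      qed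
      finally show "(\<Sum>i<N. m i * x ^ i) \<le> \<bar>markov_fun c \<mu> x\<bar>" .
    qed
  qed
  have summ: "summable m"
    by (rule summableI_nonneg_bounded[OF m_nn bnd])
  have one_meas: "measure \<mu> {1} = 0"
  proof -
    have s1: "{1} \<in> sets \<mu>" using s by simp
    have fin1: "emeasure \<mu> {1} < \<infinity>"
      using finite_measure.emeasure_finite[OF fin, of "{1}"] by (simp add: less_top)
    have "measure \<mu> {1} \<le> m i" for i
    proof -
      have "measure \<mu> {1} = (\<integral>t. indicator {1} t \<partial>\<mu>)"
        using sp by (simp add: Bochner_Integration.integral_indicator)
      also have "\<dots> \<le> m i"
        unfolding m_def
      proof (rule integral_mono_AE)
        show "integrable \<mu> (indicator {1} :: real \<Rightarrow> real)" using s1 fin1 by simp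
        show "integrable \<mu> (\<lambda>t. t ^ i)" by (rule int_pow[OF s fin z])
        show "AE t in \<mu>. indicator {1} t \<le> t ^ i"
          using AE01[OF s z] by eventually_elim (auto simp: indicator_def)
      qed
      finally show ?thesis .
    qed
    then have "measure \<mu> {1} \<le> 0"
      by (intro LIMSEQ_le_const[OF summable_LIMSEQ_zero[OF summ]]) blast
    then show ?thesis using measure_nonneg[of \<mu> "{1}"] by linarith
  qed
  have AE1: "AE t in \<mu>. t \<noteq> 1"
  proof (rule AE_I[where N="{1}"])
    show "emeasure \<mu> {1} = 0"
      using one_meas finite_measure.emeasure_eq_measure[OF fin] by simp
  qed (use s in auto)
  have AE01': "AE t in \<mu>. 0 \<le> t \<and> t < 1"
    using AE01[OF s z] AE1 by eventually_elim auto
  have intg: "integrable \<mu> (\<lambda>t. 1 / (1 - t))"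
  proof (rule integrable_monotone_convergence[where f="\<lambda>n t. \<Sum>i<n. t ^ i" and x="suminf m"])
    show "integrable \<mu> (\<lambda>t. \<Sum>i<n. t ^ i)" for n
      using int_pow[OF s fin z] by simp
    show "AE t in \<mu>. mono (\<lambda>n. \<Sum>i<n. t ^ i)"
      using AE01' by eventually_elim (auto intro!: incseq_SucI)
    show "AE t in \<mu>. (\<lambda>n. \<Sum>i<n. t ^ i) \<longlonglongrightarrow> 1 / (1 - t)"
      using AE01'
    proof eventually_elim
      case (elim t)
      then have "norm t < 1" by auto
      from geometric_sums[OF this] show ?case by (simp add: sums_def)
    qed
    have "(\<integral>t. (\<Sum>i<n. t ^ i) \<partial>\<mu>) = (\<Sum>i<n. m i)" for n
      unfolding m_def using int_pow[OF s fin z] by (simp add: integral_sum)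
    then show "(\<lambda>n. \<integral>t. (\<Sum>i<n. t ^ i) \<partial>\<mu>) \<longlonglongrightarrow> suminf m"
      using summable_LIMSEQ[OF summ] by simp
    show "(\<lambda>t. 1 / (1 - t)) \<in> borel_measurable \<mu>"
      by (rule meas_cong[OF s]) measurable
  qed
  have pw: "(\<lambda>n. \<Sum>i<n. lam i * x ^ i) \<longlonglongrightarrow> markov_fun c \<mu> x" if x: "x \<in> {-1..1}" for x
  proof -
    have "(\<lambda>n. \<Sum>i<n. m i * x ^ i) \<longlonglongrightarrow> (\<integral>t. 1 / (1 - t * x) \<partial>\<mu>)"
      unfolding m_def
    proof (rule key[OF s fin z intg])
      show "AE t in \<mu>. \<forall>n. \<bar>\<Sum>i<n. (t * x) ^ i\<bar> \<le> 1 / (1 - t)"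
        using AE01'
      proof eventually_elim
        case (elim t)
        have tx: "\<bar>t * x\<bar> \<le> t" using elim x by (auto simp: abs_mult intro: mult_left_le)
        show ?case
        proof
          fix n
          have "\<bar>\<Sum>i<n. (t * x) ^ i\<bar> \<le> 1 / (1 - \<bar>t * x\<bar>)"
            using tx elim by (intro geom_bound) auto
          also have "\<dots> \<le> 1 / (1 - t)"
            using tx elim by (intro divide_left_mono) auto
          finally show "\<bar>\<Sum>i<n. (t * x) ^ i\<bar> \<le> 1 / (1 - t)" .
        qed
      qed
      show "AE t in \<mu>. \<bar>t * x\<bar> < 1"
        using AE01'
      proof eventually_elim
        case (elim t)
        have "\<bar>t * x\<bar> \<le> t" using elim x by (auto simp: abs_mult intro: mult_left_le)
        then show ?case using elim by auto
      qed
    qed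
    from tendsto_mult_left[OF this, of c] show ?thesis
      by (simp add: markov_fun_def mom m_def[symmetric] sum_distrib_left mult.assoc)
  qed
  have UL: "uniform_limit {-1..1} (\<lambda>n x. \<Sum>i<n. lam i * x ^ i) (\<lambda>x. suminf (\<lambda>i. lam i * x ^ i)) sequentially"
  proof (rule Weierstrass_m_test[OF _ summ])
    fix n and x :: real assume x: "x \<in> {-1..1}"
    have "\<bar>x\<bar> ^ n \<le> 1" using x by (intro power_le_one) auto
    then have "m n * \<bar>x\<bar> ^ n \<le> m n"
      using m_nn[of n] by (intro mult_left_le) auto
    moreover have "\<bar>lam n * x ^ n\<bar> = m n * \<bar>x\<bar> ^ n"
      using m_nn[of n] by (simp add: mom m_def[symmetric] abs_mult ac power_abs)
    ultimately show "norm (lam n * x ^ n) \<le> m n" by simp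
  qed
  have SE: "suminf (\<lambda>i. lam i * x ^ i) = markov_fun c \<mu> x" if "x \<in> {-1..1}" for x
  proof -
    from pw[OF that] have "(\<lambda>i. lam i * x ^ i) sums markov_fun c \<mu> x" by (simp add: sums_def)
    then show ?thesis by (rule sums_unique[symmetric])
  qed
  have "uniform_limit {-1..1} (\<lambda>n x. \<Sum>i<n. lam i * x ^ i) (\<lambda>x. suminf (\<lambda>i. lam i * x ^ i)) sequentially
     \<longleftrightarrow> uniform_limit {-1..1} (\<lambda>n x. \<Sum>i<n. lam i * x ^ i) (markov_fun c \<mu>) sequentially"
    by (rule uniform_limit_cong') (auto simp: SE)
  with UL show ?thesis by blast
qed

theorem lemma2p2:
  fixes lam :: "nat \<Rightarrow> real"
  shows "(\<exists>c \<mu>. in_M0 c \<mu> \<and>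
            uniform_limit {-1..1} (\<lambda>n x. \<Sum>i<n. lam i * x ^ i) (markov_fun c \<mu>) sequentially)
         \<longleftrightarrow> restricted_hausdorff_solvable lam"
  using dir1 dir2 unfolding restricted_hausdorff_solvable_def by blast

end
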